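(* Let $s\ge1$ and $B\in\mathbb{F}_2^{s\times s}$, and define \[ H_X(B)=[\,B\otimes I_s \mid I_s\otimes B^{\mathsf T}\,],\qquad H_Z(B)=[\,I_s\otimes B \mid B^{\mathsf T}\otimes I_s\,]. \] If the Tanner graph of $B$ has no 4-cycles and no simple 6-cycles, then the Tanner graphs of $H_X(B)$ and of $H_Z(B)$ also have no 4-cycles and no simple 6-cycles.
   Context: $\otimes$ denotes the Kronecker product and $I_s$ the $s\times s$ identity over $\mathbb{F}_2$. The Tanner graph of a binary matrix $H$ is the bipartite graph whose vertices are the rows (check nodes) and columns (variable nodes) of $H$, with row $r$ adjacent to column $c$ iff $H_{rc}=1$. A simple $2\ell$-cycle is a cycle in this graph of length $2\ell$ with all vertices distinct. *)

theory Defs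
  imports Main
begin

text \<open>Binary matrices over F_2 are represented as functions nat => nat => bool
  (True = 1, False = 0), with the dimensions carried separately; only entries
  with row index < m and column index < n are meaningful.\<close>

type_synonym bmat = "nat \<Rightarrow> nat \<Rightarrow> bool"

definition bid :: bmat where
  "bid = (\<lambda>i j. i = j)"

definition btrans :: "bmat \<Rightarrow> bmat" where
  "btrans A = (\<lambda>i j. A j i)"

text \<open>Kronecker product A \<otimes> C, where C has size s x s (block size s).
  Over F_2 the product of entries is conjunction.\<close>
definition bkron :: "nat \<Rightarrow> bmat \<Rightarrow> bmat \<Rightarrow> bmat" where
  "bkron s A C = (\<lambda>i j. A (i div s) (j div s) \<and> C (i mod s) (j mod s))"

definition bhcat :: "nat \<Rightarrow> bmat \<Rightarrow> bmat \<Rightarrow> bmat" where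
  "bhcat n A C = (\<lambda>i j. if j < n then A i j else C i (j - n))"

definition HX :: "nat \<Rightarrow> bmat \<Rightarrow> bmat" where
  "HX s B = bhcat (s * s) (bkron s B bid) (bkron s bid (btrans B))"

definition HZ :: "nat \<Rightarrow> bmat \<Rightarrow> bmat" where
  "HZ s B = bhcat (s * s) (bkron s bid B) (bkron s (btrans B) bid)"

text \<open>The Tanner graph of the m x n matrix H has a simple 2l-cycle:
  distinct check nodes r 0..r (l-1) and distinct variable nodes c 0..c (l-1)
  with edges r i -- c i and r i -- c ((i+1) mod l), i.e. the closed walk
  r 0, c 1, r 1, c 2, ..., r (l-1), c 0, r 0 with all vertices distinct.\<close>
definition tanner_cycle :: "bmat \<Rightarrow> nat \<Rightarrow> nat \<Rightarrow> nat \<Rightarrow> bool" where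
  "tanner_cycle H m n l \<longleftrightarrow>
     (\<exists>r c :: nat \<Rightarrow> nat.
        (\<forall>i<l. r i < m \<and> c i < n) \<and>
        inj_on r {..<l} \<and> inj_on c {..<l} \<and>
        (\<forall>i<l. H (r i) (c i) \<and> H (r i) (c ((i + 1) mod l))))"

end

theory Submission imports Defs begin

lemma tc2: "tanner_cycle H m n 2 \<longleftrightarrow> (\<exists>r0 r1 c0 c1. r0<m \<and> r1<m \<and> c0<n \<and> c1<n \<and> r0\<noteq>r1 \<and> c0\<noteq>c1
   \<and> H r0 c0 \<and> H r0 c1 \<and> H r1 c1 \<and> H r1 c0)"
proof
  assume "tanner_cycle H m n 2"
  then obtain r c :: "nat \<Rightarrow> nat" where a: "\<forall>i<2. r i < m \<and> c i < n" "inj_on r {..<2}" "inj_on c {..<2}"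
     "\<forall>i<2. H (r i) (c i) \<and> H (r i) (c ((i + 1) mod 2))" unfolding tanner_cycle_def by blast
  have "r 0 \<noteq> r 1" "c 0 \<noteq> c 1" using inj_onD[OF a(2), of 0 1] inj_onD[OF a(3), of 0 1] by auto
  moreover have "H (r 0) (c 0)" "H (r 0) (c 1)" "H (r 1) (c 1)" "H (r 1) (c 0)"
    using a(4)[rule_format, of 0] a(4)[rule_format, of 1] by auto
  moreover have "r 0 < m" "r 1 < m" "c 0 < n" "c 1 < n" using a(1) by auto
  ultimately show "\<exists>r0 r1 c0 c1. r0<m \<and> r1<m \<and> c0<n \<and> c1<n \<and> r0\<noteq>r1 \<and> c0\<noteq>c1
   \<and> H r0 c0 \<and> H r0 c1 \<and> H r1 c1 \<and> H r1 c0" by blast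
next
  assume "\<exists>r0 r1 c0 c1. r0<m \<and> r1<m \<and> c0<n \<and> c1<n \<and> r0\<noteq>r1 \<and> c0\<noteq>c1
   \<and> H r0 c0 \<and> H r0 c1 \<and> H r1 c1 \<and> H r1 c0"
  then obtain r0 r1 c0 c1 where b: "r0<m" "r1<m" "c0<n" "c1<n" "r0\<noteq>r1" "c0\<noteq>c1"
   "H r0 c0" "H r0 c1" "H r1 c1" "H r1 c0" by blast
  have e: "i<2 \<longleftrightarrow> i = 0 \<or> i = 1" for i :: nat by auto
  show "tanner_cycle H m n 2" unfolding tanner_cycle_def
    apply (rule exI[of _ "\<lambda>i. if i=0 then r0 else r1"], rule exI[of _ "\<lambda>i. if i=0 then c0 else c1"])
    using b by (auto simp: inj_on_def e)
qed

lemma tc3: "tanner_cycle H m n 3 \<longleftrightarrow> (\<exists>r0 r1 r2 c0 c1 c2. r0<m \<and> r1<m \<and> r2<m \<and> c0<n \<and> c1<n \<and> c2<n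
   \<and> r0\<noteq>r1 \<and> r0\<noteq>r2 \<and> r1\<noteq>r2 \<and> c0\<noteq>c1 \<and> c0\<noteq>c2 \<and> c1\<noteq>c2
   \<and> H r0 c0 \<and> H r0 c1 \<and> H r1 c1 \<and> H r1 c2 \<and> H r2 c2 \<and> H r2 c0)"
proof
  assume "tanner_cycle H m n 3"
  then obtain r c :: "nat \<Rightarrow> nat" where a: "\<forall>i<3. r i < m \<and> c i < n" "inj_on r {..<3}" "inj_on c {..<3}"
     "\<forall>i<3. H (r i) (c i) \<and> H (r i) (c ((i + 1) mod 3))" unfolding tanner_cycle_def by blast
  have "r 0 \<noteq> r 1" "c 0 \<noteq> c 1" "r 0 \<noteq> r 2" "c 0 \<noteq> c 2" "r 1 \<noteq> r 2" "c 1 \<noteq> c 2"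
    using inj_onD[OF a(2), of 0 1] inj_onD[OF a(3), of 0 1] inj_onD[OF a(2), of 0 2] inj_onD[OF a(3), of 0 2]
     inj_onD[OF a(2), of 1 2] inj_onD[OF a(3), of 1 2] by auto
  moreover have "H (r 0) (c 0)" "H (r 0) (c 1)" "H (r 1) (c 1)" "H (r 1) (c 2)" "H (r 2) (c 2)" "H (r 2) (c 0)"
    using a(4)[rule_format, of 0] a(4)[rule_format, of 1] a(4)[rule_format, of 2] by (auto simp: numeral_2_eq_2)
  moreover have "r 0 < m" "r 1 < m" "r 2 < m" "c 0 < n" "c 1 < n" "c 2 < n" using a(1) by auto
  ultimately show "\<exists>r0 r1 r2 c0 c1 c2. r0<m \<and> r1<m \<and> r2<m \<and> c0<n \<and> c1<n \<and> c2<n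
   \<and> r0\<noteq>r1 \<and> r0\<noteq>r2 \<and> r1\<noteq>r2 \<and> c0\<noteq>c1 \<and> c0\<noteq>c2 \<and> c1\<noteq>c2
   \<and> H r0 c0 \<and> H r0 c1 \<and> H r1 c1 \<and> H r1 c2 \<and> H r2 c2 \<and> H r2 c0" by blast
next
  assume "\<exists>r0 r1 r2 c0 c1 c2. r0<m \<and> r1<m \<and> r2<m \<and> c0<n \<and> c1<n \<and> c2<n
   \<and> r0\<noteq>r1 \<and> r0\<noteq>r2 \<and> r1\<noteq>r2 \<and> c0\<noteq>c1 \<and> c0\<noteq>c2 \<and> c1\<noteq>c2
   \<and> H r0 c0 \<and> H r0 c1 \<and> H r1 c1 \<and> H r1 c2 \<and> H r2 c2 \<and> H r2 c0"
  then obtain r0 r1 r2 c0 c1 c2 where b: "r0<m" "r1<m" "r2<m" "c0<n" "c1<n" "c2<n"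
   "r0\<noteq>r1" "r0\<noteq>r2" "r1\<noteq>r2" "c0\<noteq>c1" "c0\<noteq>c2" "c1\<noteq>c2"
   "H r0 c0" "H r0 c1" "H r1 c1" "H r1 c2" "H r2 c2" "H r2 c0" by blast
  have e: "i<3 \<longleftrightarrow> i = 0 \<or> i = 1 \<or> i = 2" for i :: nat by auto
  show "tanner_cycle H m n 3" unfolding tanner_cycle_def
    apply (rule exI[of _ "\<lambda>i. if i=0 then r0 else if i = 1 then r1 else r2"],
           rule exI[of _ "\<lambda>i. if i=0 then c0 else if i = 1 then c1 else c2"])
    using b by (auto simp: inj_on_def e)
qed

lemma trans_cyc:
  assumes "\<not> tanner_cycle B s s 2" "\<not> tanner_cycle B s s 3"
  shows "\<not> tanner_cycle (btrans B) s s 2" "\<not> tanner_cycle (btrans B) s s 3"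
proof -
  show "\<not> tanner_cycle (btrans B) s s 2" using assms(1) unfolding tc2 btrans_def by metis
  show "\<not> tanner_cycle (btrans B) s s 3" using assms(2) unfolding tc3 btrans_def
    apply clarify
    subgoal for r0 r1 r2 c0 c1 c2
      apply (erule notE)
      apply (rule exI[of _ c1], rule exI[of _ c2], rule exI[of _ c0])
      apply (rule exI[of _ r0], rule exI[of _ r1], rule exI[of _ r2])
      by auto
    done
qed

lemma generic:
  fixes H A C :: bmat and p q P Q :: "nat \<Rightarrow> nat" and L :: "nat \<Rightarrow> bool"
  assumes rows: "\<And>x y. x<m \<Longrightarrow> y<m \<Longrightarrow> p x = p y \<Longrightarrow> q x = q y \<Longrightarrow> x = y"
    and cols: "\<And>x y. x<n \<Longrightarrow> y<n \<Longrightarrow> L x = L y \<Longrightarrow> P x = P y \<Longrightarrow> Q x = Q y \<Longrightarrow> x = y"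
    and H: "\<And>r c. r<m \<Longrightarrow> c<n \<Longrightarrow> H r c = (if L c then A (p r) (P c) \<and> q r = Q c
                                               else p r = P c \<and> C (q r) (Q c))"
    and rg: "\<And>r. r<m \<Longrightarrow> p r < k \<and> q r < k" "\<And>c. c<n \<Longrightarrow> P c < k \<and> Q c < k"
    and nA: "\<not> tanner_cycle A k k 2" "\<not> tanner_cycle A k k 3"
    and nC: "\<not> tanner_cycle C k k 2" "\<not> tanner_cycle C k k 3"
  shows "\<not> tanner_cycle H m n 2 \<and> \<not> tanner_cycle H m n 3"
proof
  show "\<not> tanner_cycle H m n 2"
  proof
    assume "tanner_cycle H m n 2"
    then obtain r0 r1 c0 c1 where b: "r0<m" "r1<m" "c0<n" "c1<n" "r0\<noteq>r1" "c0\<noteq>c1"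
     "H r0 c0" "H r0 c1" "H r1 c1" "H r1 c0" unfolding tc2 by blast
    note h = b(7-10)[unfolded H[OF b(1) b(3)] H[OF b(1) b(4)] H[OF b(2) b(4)] H[OF b(2) b(3)]]
    have rr: "p r0 \<noteq> p r1 \<or> q r0 \<noteq> q r1" using rows[OF b(1) b(2)] b(5) by blast
    have cc: "L c0 \<noteq> L c1 \<or> P c0 \<noteq> P c1 \<or> Q c0 \<noteq> Q c1" using cols[OF b(3) b(4)] b(6) by blast
    have rgs: "p r0 < k" "p r1 < k" "q r0 < k" "q r1 < k" "P c0 < k" "P c1 < k" "Q c0 < k" "Q c1 < k"
      using rg b(1-4) by auto
    have same: "L c0 = L c1"
    proof (rule ccontr)
      assume "L c0 \<noteq> L c1"
      then have "p r0 = p r1 \<and> q r0 = q r1" using h by (cases "L c0") auto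
      then show False using rr by blast
    qed
    show False
    proof (cases "L c0")
      assume "L c0" then have "L c1" using same by simp
      with \<open>L c0\<close> h have e: "q r0 = q r1" "Q c0 = Q c1" "A (p r0) (P c0)" "A (p r0) (P c1)" "A (p r1) (P c1)" "A (p r1) (P c0)"
        by auto
      have "p r0 \<noteq> p r1" "P c0 \<noteq> P c1" using e(1,2) rr cc same by auto
      with e rgs have "\<exists>r0 r1 c0 c1. r0<k \<and> r1<k \<and> c0<k \<and> c1<k \<and> r0\<noteq>r1 \<and> c0\<noteq>c1
         \<and> A r0 c0 \<and> A r0 c1 \<and> A r1 c1 \<and> A r1 c0" by blast
      with nA show False unfolding tc2 by blast
    next
      assume "\<not> L c0" then have "\<not> L c1" using same by simp
      with \<open>\<not> L c0\<close> h have e: "p r0 = p r1" "P c0 = P c1" "C (q r0) (Q c0)" "C (q r0) (Q c1)" "C (q r1) (Q c1)" "C (q r1) (Q c0)"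
        by auto
      have "q r0 \<noteq> q r1" "Q c0 \<noteq> Q c1" using e(1,2) rr cc same by auto
      with e rgs have "\<exists>r0 r1 c0 c1. r0<k \<and> r1<k \<and> c0<k \<and> c1<k \<and> r0\<noteq>r1 \<and> c0\<noteq>c1
         \<and> C r0 c0 \<and> C r0 c1 \<and> C r1 c1 \<and> C r1 c0" by blast
      with nC show False unfolding tc2 by blast
    qed
  qed
  show "\<not> tanner_cycle H m n 3"
  proof
    assume "tanner_cycle H m n 3"
    then obtain r0 r1 r2 c0 c1 c2 where b: "r0<m" "r1<m" "r2<m" "c0<n" "c1<n" "c2<n"
     "r0\<noteq>r1" "r0\<noteq>r2" "r1\<noteq>r2" "c0\<noteq>c1" "c0\<noteq>c2" "c1\<noteq>c2"
     "H r0 c0" "H r0 c1" "H r1 c1" "H r1 c2" "H r2 c2" "H r2 c0" unfolding tc3 by blast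
    note h = b(13-18)[unfolded H[OF b(1) b(4)] H[OF b(1) b(5)] H[OF b(2) b(5)] H[OF b(2) b(6)]
        H[OF b(3) b(6)] H[OF b(3) b(4)]]
    have rr: "p r0 \<noteq> p r1 \<or> q r0 \<noteq> q r1" "p r0 \<noteq> p r2 \<or> q r0 \<noteq> q r2" "p r1 \<noteq> p r2 \<or> q r1 \<noteq> q r2"
      using rows[OF b(1) b(2)] rows[OF b(1) b(3)] rows[OF b(2) b(3)] b(7-9) by blast+
    have cc: "L c0 \<noteq> L c1 \<or> P c0 \<noteq> P c1 \<or> Q c0 \<noteq> Q c1" "L c0 \<noteq> L c2 \<or> P c0 \<noteq> P c2 \<or> Q c0 \<noteq> Q c2"
       "L c1 \<noteq> L c2 \<or> P c1 \<noteq> P c2 \<or> Q c1 \<noteq> Q c2"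
      using cols[OF b(4) b(5)] cols[OF b(4) b(6)] cols[OF b(5) b(6)] b(10-12) by blast+
    have rgs: "p r0 < k" "p r1 < k" "p r2 < k" "q r0 < k" "q r1 < k" "q r2 < k"
       "P c0 < k" "P c1 < k" "P c2 < k" "Q c0 < k" "Q c1 < k" "Q c2 < k"
      using rg b(1-6) by auto
    have same: "L c0 = L c1 \<and> L c1 = L c2"
    proof (rule ccontr)
      assume "\<not> (L c0 = L c1 \<and> L c1 = L c2)"
      have i1: "L c1 \<Longrightarrow> q r0 = q r1" "\<not> L c1 \<Longrightarrow> p r0 = p r1" using h(2,3) by auto
      have i2: "L c2 \<Longrightarrow> q r1 = q r2" "\<not> L c2 \<Longrightarrow> p r1 = p r2" using h(4,5) by auto
      have i0: "L c0 \<Longrightarrow> q r2 = q r0" "\<not> L c0 \<Longrightarrow> p r2 = p r0" using h(6,1) by auto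
      from \<open>\<not> (L c0 = L c1 \<and> L c1 = L c2)\<close>
      have "(p r0 = p r1 \<and> q r0 = q r1) \<or> (p r0 = p r2 \<and> q r0 = q r2) \<or> (p r1 = p r2 \<and> q r1 = q r2)"
        by (cases "L c0"; cases "L c1"; cases "L c2") (metis i0 i1 i2)+
      then show False using rr by blast
    qed
    show False
    proof (cases "L c0")
      assume "L c0" then have "L c1" "L c2" using same by simp_all
      with \<open>L c0\<close> h have e: "q r0 = q r1" "q r0 = q r2" "Q c0 = Q c1" "Q c0 = Q c2"
        "A (p r0) (P c0)" "A (p r0) (P c1)" "A (p r1) (P c1)" "A (p r1) (P c2)" "A (p r2) (P c2)" "A (p r2) (P c0)"
        by auto
      have "p r0 \<noteq> p r1" using rr(1) e(1) by simp
      moreover have "p r0 \<noteq> p r2" using rr(2) e(2) by simp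
      moreover have "p r1 \<noteq> p r2" using rr(3) e(1,2) by simp
      moreover have "P c0 \<noteq> P c1" using cc(1) e(3) same by simp
      moreover have "P c0 \<noteq> P c2" using cc(2) e(4) same by simp
      moreover have "P c1 \<noteq> P c2" using cc(3) e(3,4) same by simp
      ultimately have d: "p r0 \<noteq> p r1" "p r0 \<noteq> p r2" "p r1 \<noteq> p r2" "P c0 \<noteq> P c1" "P c0 \<noteq> P c2" "P c1 \<noteq> P c2"
        by blast+
      note d
      have "\<exists>r0 r1 r2 c0 c1 c2. r0<k \<and> r1<k \<and> r2<k \<and> c0<k \<and> c1<k \<and> c2<k
   \<and> r0\<noteq>r1 \<and> r0\<noteq>r2 \<and> r1\<noteq>r2 \<and> c0\<noteq>c1 \<and> c0\<noteq>c2 \<and> c1\<noteq>c2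
   \<and> A r0 c0 \<and> A r0 c1 \<and> A r1 c1 \<and> A r1 c2 \<and> A r2 c2 \<and> A r2 c0"
        by (intro exI[of _ "p r0"] exI[of _ "p r1"] exI[of _ "p r2"]
             exI[of _ "P c0"] exI[of _ "P c1"] exI[of _ "P c2"] conjI; fact)
      with nA(2)[unfolded tc3] show False by (rule notE)
    next
      assume "\<not> L c0" then have "\<not> L c1" "\<not> L c2" using same by simp_all
      with \<open>\<not> L c0\<close> h have e: "p r0 = p r1" "p r0 = p r2" "P c0 = P c1" "P c0 = P c2"
        "C (q r0) (Q c0)" "C (q r0) (Q c1)" "C (q r1) (Q c1)" "C (q r1) (Q c2)" "C (q r2) (Q c2)" "C (q r2) (Q c0)"
        by auto
      have "q r0 \<noteq> q r1" using rr(1) e(1) by simp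
      moreover have "q r0 \<noteq> q r2" using rr(2) e(2) by simp
      moreover have "q r1 \<noteq> q r2" using rr(3) e(1,2) by simp
      moreover have "Q c0 \<noteq> Q c1" using cc(1) e(3) same by simp
      moreover have "Q c0 \<noteq> Q c2" using cc(2) e(4) same by simp
      moreover have "Q c1 \<noteq> Q c2" using cc(3) e(3,4) same by simp
      ultimately have d: "q r0 \<noteq> q r1" "q r0 \<noteq> q r2" "q r1 \<noteq> q r2" "Q c0 \<noteq> Q c1" "Q c0 \<noteq> Q c2" "Q c1 \<noteq> Q c2"
        by blast+
      note d
      have "\<exists>r0 r1 r2 c0 c1 c2. r0<k \<and> r1<k \<and> r2<k \<and> c0<k \<and> c1<k \<and> c2<k
   \<and> r0\<noteq>r1 \<and> r0\<noteq>r2 \<and> r1\<noteq>r2 \<and> c0\<noteq>c1 \<and> c0\<noteq>c2 \<and> c1\<noteq>c2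
   \<and> C r0 c0 \<and> C r0 c1 \<and> C r1 c1 \<and> C r1 c2 \<and> C r2 c2 \<and> C r2 c0"
        by (intro exI[of _ "q r0"] exI[of _ "q r1"] exI[of _ "q r2"]
             exI[of _ "Q c0"] exI[of _ "Q c1"] exI[of _ "Q c2"] conjI; fact)
      with nC(2)[unfolded tc3] show False by (rule notE)
    qed
  qed
qed


lemma rows_dm: "(x::nat) div s = y div s \<Longrightarrow> x mod s = y mod s \<Longrightarrow> x = y"
  by (metis div_mult_mod_eq)

lemma rg_dm: assumes "s \<ge> 1" "(r::nat) < s * s" shows "r div s < s" "r mod s < s"
  using assms by (auto simp: div_less_iff_less_mult)

definition shf :: "nat \<Rightarrow> nat \<Rightarrow> nat" where "shf N c = (if c < N then c else c - N)"

lemma shf_lt: "c < 2 * N \<Longrightarrow> shf N c < N" by (auto simp: shf_def)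

lemma shf_inj: "x < 2*N \<Longrightarrow> y < 2*N \<Longrightarrow> (x < N) = (y < N) \<Longrightarrow> shf N x = shf N y \<Longrightarrow> x = y"
  by (auto simp: shf_def split: if_splits)

theorem mainTheorem2:
  fixes s :: nat and B :: bmat
  assumes "s \<ge> 1"
    and "\<not> tanner_cycle B s s 2"
    and "\<not> tanner_cycle B s s 3"
  shows "\<not> tanner_cycle (HX s B) (s * s) (2 * (s * s)) 2
       \<and> \<not> tanner_cycle (HX s B) (s * s) (2 * (s * s)) 3
       \<and> \<not> tanner_cycle (HZ s B) (s * s) (2 * (s * s)) 2
       \<and> \<not> tanner_cycle (HZ s B) (s * s) (2 * (s * s)) 3"
proof -
  note T = trans_cyc[OF assms(2,3)]
  have X: "\<not> tanner_cycle (HX s B) (s * s) (2 * (s * s)) 2 \<and> \<not> tanner_cycle (HX s B) (s * s) (2 * (s * s)) 3"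
  proof (rule generic[where p = "\<lambda>r. r div s" and q = "\<lambda>r. r mod s" and L = "\<lambda>c. c < s * s"
        and P = "\<lambda>c. shf (s*s) c div s" and Q = "\<lambda>c. shf (s*s) c mod s" and A = B and C = "btrans B" and k = s])
    show "x = y" if "x < s*s" "y < s*s" "x div s = y div s" "x mod s = y mod s" for x y
      using that rows_dm by blast
    show "x = y" if "x < 2*(s*s)" "y < 2*(s*s)" "(x < s*s) = (y < s*s)"
      "shf (s*s) x div s = shf (s*s) y div s" "shf (s*s) x mod s = shf (s*s) y mod s" for x y
      using that shf_inj rows_dm by metis
    show "HX s B r c = (if c < s*s then B (r div s) (shf (s*s) c div s) \<and> r mod s = shf (s*s) c mod s
       else r div s = shf (s*s) c div s \<and> btrans B (r mod s) (shf (s*s) c mod s))" for r c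
      by (auto simp: HX_def bhcat_def bkron_def bid_def btrans_def shf_def)
    show "r div s < s \<and> r mod s < s" if "r < s*s" for r using rg_dm[OF assms(1) that] by simp
    show "shf (s*s) c div s < s \<and> shf (s*s) c mod s < s" if "c < 2*(s*s)" for c
      using rg_dm[OF assms(1) shf_lt[OF that]] by simp
  qed (use assms T in auto)
  have Z: "\<not> tanner_cycle (HZ s B) (s * s) (2 * (s * s)) 2 \<and> \<not> tanner_cycle (HZ s B) (s * s) (2 * (s * s)) 3"
  proof (rule generic[where p = "\<lambda>r. r mod s" and q = "\<lambda>r. r div s" and L = "\<lambda>c. c < s * s"
        and P = "\<lambda>c. shf (s*s) c mod s" and Q = "\<lambda>c. shf (s*s) c div s" and A = B and C = "btrans B" and k = s])
    show "x = y" if "x < s*s" "y < s*s" "x mod s = y mod s" "x div s = y div s" for x y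
      using that rows_dm by blast
    show "x = y" if "x < 2*(s*s)" "y < 2*(s*s)" "(x < s*s) = (y < s*s)"
      "shf (s*s) x mod s = shf (s*s) y mod s" "shf (s*s) x div s = shf (s*s) y div s" for x y
      using that shf_inj rows_dm by metis
    show "HZ s B r c = (if c < s*s then B (r mod s) (shf (s*s) c mod s) \<and> r div s = shf (s*s) c div s
       else r mod s = shf (s*s) c mod s \<and> btrans B (r div s) (shf (s*s) c div s))" for r c
      by (auto simp: HZ_def bhcat_def bkron_def bid_def btrans_def shf_def)
    show "r mod s < s \<and> r div s < s" if "r < s*s" for r using rg_dm[OF assms(1) that] by simp
    show "shf (s*s) c mod s < s \<and> shf (s*s) c div s < s" if "c < 2*(s*s)" for c
      using rg_dm[OF assms(1) shf_lt[OF that]] by simp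
  qed (use assms T in auto)
  show ?thesis using X Z by blast
qed

end
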